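(* Let $\mathsf{X},\mathsf{Y}$ be Polish spaces and $c:\mathsf{X}\times\mathsf{Y}\to[0,\infty)$ continuous. Given a nonempty $c$-cyclically monotone set $\Gamma\subseteq\mathsf{X}\times\mathsf{Y}$, define $$I(x,y):=\sup_{k\ge2}\ \sup_{(x_i,y_i)_{i=2}^k\subset\Gamma}\ \sup_{\sigma\in\Sigma(k)}\ \sum_{i=1}^k c(x_i,y_i)-\sum_{i=1}^k c(x_i,y_{\sigma(i)}),\qquad (x_1,y_1):=(x,y).$$ Then $I:\mathsf{X}\times\mathsf{Y}\to[0,\infty]$ is lower semicontinuous and $I=0$ on $\Gamma$. Moreover, $$I(x,y)\ge\sup_{k\ge2}\ \sup_{(x_i,y_i)_{i=2}^k\subset\Gamma}\ \sum_{i=1}^k c(x_i,y_i)-\sum_{i=1}^k c(x_i,y_{i+1})\quad(y_{k+1}:=y_1),$$ and equality holds as soon as $x\in\mathsf{X}_0:=\operatorname{proj}_{\mathsf{X}}\Gamma$ or $y\in\mathsf{Y}_0:=\operatorname{proj}_{\mathsf{Y}}\Gamma$.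
   Context: $\Sigma(k)$ denotes the set of permutations of $\{1,\dots,k\}$. A set $\Gamma\subset\mathsf{X}\times\mathsf{Y}$ is $c$-cyclically monotone if $\sum_{i=1}^k c(x_i,y_i)\le\sum_{i=1}^k c(x_i,y_{i+1})$ for all $k\ge1$ and $(x_i,y_i)\in\Gamma$, with $y_{k+1}:=y_1$. *)

theory Defs
  imports "HOL-Analysis.Analysis"
begin

definition c_cyclically_monotone :: "('a \<times> 'b \<Rightarrow> real) \<Rightarrow> ('a \<times> 'b) set \<Rightarrow> bool" where
  "c_cyclically_monotone c \<Gamma> \<longleftrightarrow>
     (\<forall>k::nat. \<forall>xs ys. k \<ge> 1 \<and> (\<forall>i\<in>{1..k}. (xs i, ys i) \<in> \<Gamma>) \<longrightarrow>
        (\<Sum>i=1..k. c (xs i, ys i)) \<le> (\<Sum>i=1..k. c (xs i, ys (if i = k then 1 else i + 1))))"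

definition lower_semicont :: "('a::topological_space \<Rightarrow> ereal) \<Rightarrow> bool" where
  "lower_semicont f \<longleftrightarrow> (\<forall>t. open {p. t < f p})"

definition I_fun :: "('a \<times> 'b \<Rightarrow> real) \<Rightarrow> ('a \<times> 'b) set \<Rightarrow> 'a \<times> 'b \<Rightarrow> ereal" where
  "I_fun c \<Gamma> p = (SUP (k, xs, ys, \<sigma>) \<in> {(k::nat, xs, ys, \<sigma>). k \<ge> 2 \<and> (xs 1, ys 1) = p \<and>
        (\<forall>i\<in>{2..k}. (xs i, ys i) \<in> \<Gamma>) \<and> \<sigma> permutes {1..k}}.
      ereal ((\<Sum>i=1..k. c (xs i, ys i)) - (\<Sum>i=1..k. c (xs i, ys (\<sigma> i)))))"

definition J_fun :: "('a \<times> 'b \<Rightarrow> real) \<Rightarrow> ('a \<times> 'b) set \<Rightarrow> 'a \<times> 'b \<Rightarrow> ereal" where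
  "J_fun c \<Gamma> p = (SUP (k, xs, ys) \<in> {(k::nat, xs, ys). k \<ge> 2 \<and> (xs 1, ys 1) = p \<and>
        (\<forall>i\<in>{2..k}. (xs i, ys i) \<in> \<Gamma>)}.
      ereal ((\<Sum>i=1..k. c (xs i, ys i)) - (\<Sum>i=1..k. c (xs i, ys (if i = k then 1 else i + 1)))))"

end

theory Submission
  imports Defs "HOL-Combinatorics.Orbits"
begin

lemma orbit_compl_inv:
  assumes "permutation \<sigma>" "u \<notin> orbit \<sigma> a"
  shows "\<sigma> u \<notin> orbit \<sigma> a"
proof
  assume h: "\<sigma> u \<in> orbit \<sigma> a"
  have "orbit \<sigma> (\<sigma> u) = orbit \<sigma> a"
    using orbit_cyclic_eq3[OF cyclic_on_orbit'[OF assms(1)] h] .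
  moreover have "orbit \<sigma> (\<sigma> u) = orbit \<sigma> u" using permutation_orbit_step[OF assms(1)] .
  moreover have "u \<in> orbit \<sigma> u" using permutation_self_in_orbit[OF assms(1)] .
  ultimately show False using assms(2) by simp
qed

lemma cycle_exists:
  fixes \<sigma> :: "'x \<Rightarrow> 'x" and a :: 'x
  assumes perm: "permutation \<sigma>"
  obtains e p where "orbit \<sigma> a = e ` {1..p}" "inj_on e {1..(p::nat)}" "p \<ge> 1" "e 1 = a"
    "\<And>i. i \<in> {1..p} \<Longrightarrow> \<sigma> (e i) = e (if i = p then 1 else i + 1)"
proof -
  define p where "p = funpow_dist1 \<sigma> a a"
  define e where "e = (\<lambda>i. (\<sigma>^^(i-1)) a)"
  have self: "a \<in> orbit \<sigma> a" using permutation_self_in_orbit[OF perm] .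
  have im: "{1..p} = Suc ` {0..<p}" by (auto simp: image_iff)
  have e_suc: "e (Suc n) = (\<sigma>^^n) a" for n by (simp add: e_def)
  have O: "orbit \<sigma> a = e ` {1..p}"
    unfolding orbit_conv_funpow_dist1[OF self] p_def[symmetric] im image_image e_suc by simp
  have inj0: "inj_on (\<lambda>n. (\<sigma>^^n) a) {0..<p}" unfolding p_def using inj_on_funpow_dist1[OF self] .
  have inj: "inj_on e {1..p}"
  proof (rule inj_onI)
    fix i j assume ij: "i \<in> {1..p}" "j \<in> {1..p}" "e i = e j"
    have "(\<sigma>^^(i-1)) a = (\<sigma>^^(j-1)) a" using ij(3) by (simp add: e_def)
    moreover have "i - 1 \<in> {0..<p}" "j - 1 \<in> {0..<p}" using ij(1,2) by auto
    ultimately have "i - 1 = j - 1" using inj_onD[OF inj0] by blast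
    then show "i = j" using ij by auto
  qed
  have p1: "p \<ge> 1" by (simp add: p_def)
  have e1: "e 1 = a" by (simp add: e_def)
  have per: "(\<sigma>^^p) a = a" unfolding p_def using funpow_dist1_prop[OF self] .
  have step: "\<sigma> (e i) = e (if i = p then 1 else i + 1)" if iin: "i \<in> {1..p}" for i
  proof -
    obtain m where m: "i = Suc m" using iin by (cases i) auto
    have "\<sigma> (e i) = (\<sigma>^^i) a" unfolding m e_def by simp
    then show ?thesis using per by (auto simp: e_def)
  qed
  show ?thesis
    apply (rule that[of e p])
        apply (rule O)
       apply (rule inj)
      apply (rule p1)
     apply (rule e1)
    apply (erule step)
    done
qed

lemma cm_cycle:
  fixes c :: "'a \<times> 'b \<Rightarrow> real"
  assumes cm: "c_cyclically_monotone c \<Gamma>" and perm: "permutation \<sigma>"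
    and G: "\<forall>u\<in>orbit \<sigma> a. (x u, y u) \<in> \<Gamma>"
  shows "(\<Sum>u\<in>orbit \<sigma> a. c (x u, y u) - c (x u, y (\<sigma> u))) \<le> 0"
proof -
  obtain e p where cs: "orbit \<sigma> a = e ` {1..p}" "inj_on e {1..(p::nat)}" "p \<ge> 1" "e 1 = a"
    "\<And>i. i \<in> {1..p} \<Longrightarrow> \<sigma> (e i) = e (if i = p then 1 else i + 1)"
    using cycle_exists[OF perm] by metis
  have "(\<Sum>u\<in>orbit \<sigma> a. c (x u, y u) - c (x u, y (\<sigma> u)))
     = (\<Sum>i=1..p. c (x (e i), y (e i)) - c (x (e i), y (\<sigma> (e i))))"
    unfolding cs(1) by (rule sum.reindex[OF cs(2), unfolded comp_def])
  also have "\<dots> = (\<Sum>i=1..p. c (x (e i), y (e i)) - c (x (e i), y (e (if i = p then 1 else i + 1))))"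
    using cs(5) by (intro sum.cong) auto
  also have "\<dots> = (\<Sum>i=1..p. c ((x o e) i, (y o e) i)) - (\<Sum>i=1..p. c ((x o e) i, (y o e) (if i = p then 1 else i + 1)))"
    by (simp add: sum_subtractf)
  also have "\<dots> \<le> 0"
  proof -
    have "\<forall>i\<in>{1..p}. ((x o e) i, (y o e) i) \<in> \<Gamma>" using G cs(1) by auto
    then show ?thesis using cm[unfolded c_cyclically_monotone_def, rule_format, of p "x o e" "y o e"] cs(3) by simp
  qed
  finally show ?thesis .
qed

lemma cm_perm:
  fixes c :: "'a \<times> 'b \<Rightarrow> real"
  assumes cm: "c_cyclically_monotone c \<Gamma>" and perm: "permutation \<sigma>"
  shows "finite A \<Longrightarrow> (\<forall>u\<in>A. \<sigma> u \<in> A) \<Longrightarrow> (\<forall>u\<in>A. (x u, y u) \<in> \<Gamma>) \<Longrightarrow>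
    (\<Sum>u\<in>A. c (x u, y u) - c (x u, y (\<sigma> u))) \<le> 0"
proof (induction "card A" arbitrary: A rule: less_induct)
  case less
  show ?case
  proof (cases "A = {}")
    case True then show ?thesis by simp
  next
    case False
    then obtain a where a: "a \<in> A" by auto
    let ?O = "orbit \<sigma> a"
    have OA: "?O \<subseteq> A"
    proof
      fix v assume "v \<in> ?O" then show "v \<in> A" by induct (use a less.prems in auto)
    qed
    have aO: "a \<in> ?O" using permutation_self_in_orbit[OF perm] .
    have split: "A = ?O \<union> (A - ?O)" using OA by auto
    have "(\<Sum>u\<in>A. c (x u, y u) - c (x u, y (\<sigma> u))) =
       (\<Sum>u\<in>?O. c (x u, y u) - c (x u, y (\<sigma> u))) + (\<Sum>u\<in>A - ?O. c (x u, y u) - c (x u, y (\<sigma> u)))"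
      using sum.subset_diff[OF OA less.prems(1)] by (simp add: add.commute)
    also have "\<dots> \<le> 0 + 0"
    proof (rule add_mono)
      show "(\<Sum>u\<in>?O. c (x u, y u) - c (x u, y (\<sigma> u))) \<le> 0"
        using cm_cycle[OF cm perm] OA less.prems(3) by blast
      have "card (A - ?O) < card A"
        using aO a less.prems(1) by (intro psubset_card_mono) auto
      then show "(\<Sum>u\<in>A - ?O. c (x u, y u) - c (x u, y (\<sigma> u))) \<le> 0"
        using less.hyps[of "A - ?O"] less.prems orbit_compl_inv[OF perm] by auto
    qed
    finally show ?thesis by simp
  qed
qed


lemma I_ge0:
  assumes ne: "\<Gamma> \<noteq> {}"
  shows "I_fun c \<Gamma> p \<ge> 0"
proof -
  obtain g where g: "g \<in> \<Gamma>" using ne by auto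
  define xs where "xs = (\<lambda>i::nat. if i = 1 then fst p else fst g)"
  define ys where "ys = (\<lambda>i::nat. if i = 1 then snd p else snd g)"
  have mem: "(2::nat, xs, ys, id) \<in> {(k::nat, xs, ys, \<sigma>). k \<ge> 2 \<and> (xs 1, ys 1) = p \<and>
        (\<forall>i\<in>{2..k}. (xs i, ys i) \<in> \<Gamma>) \<and> \<sigma> permutes {1..k}}"
    using g by (auto simp: xs_def ys_def permutes_id)
  have "ereal 0 \<le> I_fun c \<Gamma> p"
    unfolding I_fun_def by (rule SUP_upper2[OF mem]) simp
  then show ?thesis by (simp add: zero_ereal_def)
qed

lemma I_le0_on_Gamma:
  assumes cm: "c_cyclically_monotone c \<Gamma>" and pG: "p \<in> \<Gamma>"
  shows "I_fun c \<Gamma> p \<le> 0"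
  unfolding I_fun_def
proof (rule SUP_least, clarify)
  fix k :: nat and xs ys \<sigma>
  assume h: "2 \<le> k" "p = (xs 1, ys 1)" "\<forall>i\<in>{2..k}. (xs i, ys i) \<in> \<Gamma>" "\<sigma> permutes {1..k}"
  have perm: "permutation \<sigma>" using h(4) permutation_permutes by blast
  have pts: "\<forall>u\<in>{1..k}. (xs u, ys u) \<in> \<Gamma>"
  proof
    fix u assume "u \<in> {1..k}"
    then show "(xs u, ys u) \<in> \<Gamma>" using h pG by (cases "u = 1") auto
  qed
  have "(\<Sum>u\<in>{1..k}. c (xs u, ys u) - c (xs u, ys (\<sigma> u))) \<le> 0"
    using cm_perm[OF cm perm, of "{1..k}" xs ys] pts permutes_in_image[OF h(4)] by auto
  then show "ereal ((\<Sum>i = 1..k. c (xs i, ys i)) - (\<Sum>i = 1..k. c (xs i, ys (\<sigma> i)))) \<le> 0"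
    by (simp add: sum_subtractf zero_ereal_def)
qed

lemma shift_permutes:
  fixes k :: nat
  shows "(\<lambda>i. if i \<in> {1..k} then (if i = k then 1 else i + 1) else i) permutes {1..k}"
proof -
  let ?t = "\<lambda>i. if i \<in> {1..k} then (if i = k then 1 else i + 1) else i"
  have inj: "inj_on ?t {1..k}" by (auto simp: inj_on_def split: if_splits)
  have "?t ` {1..k} \<subseteq> {1..k}" by auto
  then have "?t ` {1..k} = {1..k}" using endo_inj_surj[OF _ _ inj] by auto
  then have bij: "bij_betw ?t {1..k} {1..k}" using inj by (simp add: bij_betw_def)
  show ?thesis
  proof (rule bij_imp_permutes[OF bij])
    fix x :: nat assume "x \<notin> {1..k}"
    then show "?t x = x" by (simp del: atLeastAtMost_iff)
  qed
qed

lemma term_le_I: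
  fixes k :: nat
  assumes h: "2 \<le> k" "\<forall>i\<in>{2..k}. (xs i, ys i) \<in> \<Gamma>"
  shows "ereal ((\<Sum>i = 1..k. c (xs i, ys i)) - (\<Sum>i = 1..k. c (xs i, ys (if i = k then 1 else i + 1))))
      \<le> I_fun c \<Gamma> (xs 1, ys 1)"
proof -
  let ?t = "\<lambda>i. if i \<in> {1..k} then (if i = k then 1 else i + 1) else i"
  have mem: "(k, xs, ys, ?t) \<in> {(k::nat, xs', ys', \<sigma>). k \<ge> 2 \<and> (xs' 1, ys' 1) = (xs 1, ys 1) \<and>
        (\<forall>i\<in>{2..k}. (xs' i, ys' i) \<in> \<Gamma>) \<and> \<sigma> permutes {1..k}}"
    using h shift_permutes[of k] by auto
  have eq: "(\<Sum>i = 1..k. c (xs i, ys (?t i))) = (\<Sum>i = 1..k. c (xs i, ys (if i = k then 1 else i + 1)))"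
    by (rule sum.cong) auto
  show ?thesis
    unfolding I_fun_def by (rule SUP_upper2[OF mem]) (simp add: eq)
qed

lemma J_elem_le_I:
  assumes z: "z \<in> {(k::nat, xs, ys). k \<ge> 2 \<and> (xs 1, ys 1) = p \<and>
        (\<forall>i\<in>{2..k}. (xs i, ys i) \<in> \<Gamma>)}"
  shows "(\<lambda>(k, xs, ys). ereal ((\<Sum>i=1..k. c (xs i, ys i)) - (\<Sum>i=1..k. c (xs i, ys (if i = k then 1 else i + 1))))) z
    \<le> I_fun c \<Gamma> p"
proof -
  obtain k xs ys where zz: "z = (k, xs, ys)" by (cases z)
  have h: "k \<ge> 2" "(xs 1, ys 1) = p" "\<forall>i\<in>{2..k}. (xs i, ys i) \<in> \<Gamma>"
    using z unfolding zz mem_Collect_eq case_prod_conv by blast+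
  show ?thesis unfolding zz case_prod_conv h(2)[symmetric] using term_le_I[OF h(1) h(3)] .
qed

lemma I_ge_J: "J_fun c \<Gamma> p \<le> I_fun c \<Gamma> p"
  unfolding J_fun_def
  by (rule SUP_least) (rule J_elem_le_I)

lemma J_ge0:
  assumes "x \<in> fst ` \<Gamma> \<or> y \<in> snd ` \<Gamma>"
  shows "0 \<le> J_fun c \<Gamma> (x, y)"
proof -
  obtain xs ys where mem: "(2::nat, xs, ys) \<in> {(k::nat, xs, ys). k \<ge> 2 \<and> (xs 1, ys 1) = (x, y) \<and>
        (\<forall>i\<in>{2..k}. (xs i, ys i) \<in> \<Gamma>)}" and
    val: "(\<Sum>i=1..2. c (xs i, ys i)) - (\<Sum>i=1..2. c (xs i, ys (if i = 2 then 1 else i + 1))) = 0"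
  proof (cases "x \<in> fst ` \<Gamma>")
    case True
    then obtain y' where y': "(x, y') \<in> \<Gamma>" by force
    show ?thesis
      by (rule that[of "\<lambda>i. x" "\<lambda>i. if i = 1 then y else y'"])
        (use y' in \<open>auto simp: numeral_2_eq_2\<close>)
  next
    case False
    then have "y \<in> snd ` \<Gamma>" using assms by auto
    then obtain x' where x': "(x', y) \<in> \<Gamma>" by force
    show ?thesis
      by (rule that[of "\<lambda>i. if i = 1 then x else x'" "\<lambda>i. y"])
        (use x' in \<open>auto simp: numeral_2_eq_2\<close>)
  qed
  have "ereal 0 \<le> J_fun c \<Gamma> (x, y)"
    unfolding J_fun_def by (rule SUP_upper2[OF mem]) (simp only: val case_prod_conv order_refl)
  then show ?thesis by (simp add: zero_ereal_def)
qed

lemma I_term_le_J: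
  fixes k :: nat
  assumes cm: "c_cyclically_monotone c \<Gamma>" and xy: "x \<in> fst ` \<Gamma> \<or> y \<in> snd ` \<Gamma>"
    and h: "2 \<le> k" "(x, y) = (xs 1, ys 1)" "\<forall>i\<in>{2..k}. (xs i, ys i) \<in> \<Gamma>" "\<sigma> permutes {1..k}"
  shows "ereal ((\<Sum>i = 1..k. c (xs i, ys i)) - (\<Sum>i = 1..k. c (xs i, ys (\<sigma> i)))) \<le> J_fun c \<Gamma> (x, y)"
proof -
  have perm: "permutation \<sigma>" using h(4) permutation_permutes by blast
  obtain e p where cs: "orbit \<sigma> 1 = e ` {1..p}" "inj_on e {1..(p::nat)}" "p \<ge> 1" "e 1 = 1"
    "\<And>i. i \<in> {1..p} \<Longrightarrow> \<sigma> (e i) = e (if i = p then 1 else i + 1)"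
    using cycle_exists[OF perm] by metis
  define D where "D = (\<lambda>u. c (xs u, ys u) - c (xs u, ys (\<sigma> u)))"
  let ?O = "orbit \<sigma> 1"
  have OA: "?O \<subseteq> {1..k}" using permutes_orbit_subset[OF h(4)] h(1) by auto
  have oneO: "1 \<in> ?O" using cs(1,3,4) by force
  have "(\<Sum>i = 1..k. c (xs i, ys i)) - (\<Sum>i = 1..k. c (xs i, ys (\<sigma> i))) = (\<Sum>u\<in>{1..k}. D u)"
    by (simp add: D_def sum_subtractf)
  also have "\<dots> = (\<Sum>u\<in>?O. D u) + (\<Sum>u\<in>{1..k} - ?O. D u)"
    using sum.subset_diff[OF OA, of D] by (simp add: add.commute)
  also have "\<dots> \<le> (\<Sum>u\<in>?O. D u)"
  proof -
    have "(\<Sum>u\<in>{1..k} - ?O. D u) \<le> 0"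
      unfolding D_def
    proof (rule cm_perm[OF cm perm])
      show "\<forall>u\<in>{1..k} - ?O. \<sigma> u \<in> {1..k} - ?O"
        using permutes_in_image[OF h(4)] orbit_compl_inv[OF perm] by auto
      show "\<forall>u\<in>{1..k} - ?O. (xs u, ys u) \<in> \<Gamma>"
      proof
        fix u assume "u \<in> {1..k} - ?O"
        then have "u \<in> {2..k}" using oneO by (cases "u = 1") auto
        then show "(xs u, ys u) \<in> \<Gamma>" using h(3) by auto
      qed
    qed auto
    then show ?thesis by simp
  qed
  also have "(\<Sum>u\<in>?O. D u) = (\<Sum>i=1..p. D (e i))"
    unfolding cs(1) by (rule sum.reindex[OF cs(2), unfolded comp_def])
  also have "\<dots> = (\<Sum>i=1..p. c (xs (e i), ys (e i)) - c (xs (e i), ys (e (if i = p then 1 else i + 1))))"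
    using cs(5) unfolding D_def by (intro sum.cong) auto
  also have "\<dots> = (\<Sum>i=1..p. c ((xs o e) i, (ys o e) i)) - (\<Sum>i=1..p. c ((xs o e) i, (ys o e) (if i = p then 1 else i + 1)))"
    by (simp add: sum_subtractf)
  finally have Vle: "(\<Sum>i = 1..k. c (xs i, ys i)) - (\<Sum>i = 1..k. c (xs i, ys (\<sigma> i)))
     \<le> (\<Sum>i=1..p. c ((xs o e) i, (ys o e) i)) - (\<Sum>i=1..p. c ((xs o e) i, (ys o e) (if i = p then 1 else i + 1)))" .
  show "ereal ((\<Sum>i = 1..k. c (xs i, ys i)) - (\<Sum>i = 1..k. c (xs i, ys (\<sigma> i)))) \<le> J_fun c \<Gamma> (x, y)"
  proof (cases "p = 1")
    case True
    then have "(\<Sum>i = 1..k. c (xs i, ys i)) - (\<Sum>i = 1..k. c (xs i, ys (\<sigma> i))) \<le> 0"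
      using Vle by simp
    then have "ereal ((\<Sum>i = 1..k. c (xs i, ys i)) - (\<Sum>i = 1..k. c (xs i, ys (\<sigma> i)))) \<le> 0"
      by (simp add: zero_ereal_def)
    also have "0 \<le> J_fun c \<Gamma> (x, y)" using J_ge0[OF xy] .
    finally show ?thesis .
  next
    case False
    then have p2: "p \<ge> 2" using cs(3) by simp
    have pts: "\<forall>i\<in>{2..p}. ((xs o e) i, (ys o e) i) \<in> \<Gamma>"
    proof
      fix i assume i: "i \<in> {2..p}"
      then have "e i \<in> e ` {1..p}" by auto
      then have "e i \<in> {1..k}" using cs(1) OA by blast
      moreover have "e i \<noteq> 1"
      proof
        assume "e i = 1"
        then have "e i = e 1" using cs(4) by simp
        then have "i = 1" using inj_onD[OF cs(2)] i cs(3) by auto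
        then show False using i by simp
      qed
      ultimately have "e i \<in> {2..k}" by auto
      then show "((xs o e) i, (ys o e) i) \<in> \<Gamma>" using h(3) by simp
    qed
    have mem: "(p, xs o e, ys o e) \<in> {(k::nat, xs, ys). k \<ge> 2 \<and> (xs 1, ys 1) = (x, y) \<and>
        (\<forall>i\<in>{2..k}. (xs i, ys i) \<in> \<Gamma>)}"
      using p2 pts h(2) cs(4) by auto
    have "ereal ((\<Sum>i=1..p. c ((xs o e) i, (ys o e) i)) - (\<Sum>i=1..p. c ((xs o e) i, (ys o e) (if i = p then 1 else i + 1))))
       \<le> J_fun c \<Gamma> (x, y)"
      unfolding J_fun_def by (rule SUP_upper2[OF mem]) simp
    then show ?thesis using Vle by (meson ereal_less_eq(3) order_trans)
  qed
qed

lemma I_le_J: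
  assumes cm: "c_cyclically_monotone c \<Gamma>" and xy: "x \<in> fst ` \<Gamma> \<or> y \<in> snd ` \<Gamma>"
  shows "I_fun c \<Gamma> (x, y) \<le> J_fun c \<Gamma> (x, y)"
  unfolding I_fun_def
  by (rule SUP_least) (use I_term_le_J[OF cm xy] in auto)

lemma cont_upd:
  fixes c :: "'a::topological_space \<times> 'b::topological_space \<Rightarrow> real"
  assumes cont: "continuous_on UNIV c"
  shows "continuous_on UNIV (\<lambda>q. c ((xs(1 := fst q)) i, (ys(1 := snd q)) j))"
proof -
  have "continuous_on UNIV (\<lambda>q::'a \<times> 'b. ((xs(1 := fst q)) i, (ys(1 := snd q)) j))"
    by (cases "i = 1"; cases "j = 1") (auto intro!: continuous_intros)
  then show ?thesis using continuous_on_compose2[OF cont] by blast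
qed

lemma I_lsc:
  fixes c :: "'a::topological_space \<times> 'b::topological_space \<Rightarrow> real"
  assumes cont: "continuous_on UNIV c"
  shows "lower_semicont (I_fun c \<Gamma>)"
  unfolding lower_semicont_def
proof
  fix t :: ereal
  define T where "T = {(k::nat, xs :: nat \<Rightarrow> 'a, ys :: nat \<Rightarrow> 'b, \<sigma> :: nat \<Rightarrow> nat). k \<ge> 2 \<and>
        (\<forall>i\<in>{2..k}. (xs i, ys i) \<in> \<Gamma>) \<and> \<sigma> permutes {1..k}}"
  define F where "F = (\<lambda>(k::nat, xs :: nat \<Rightarrow> 'a, ys :: nat \<Rightarrow> 'b, \<sigma> :: nat \<Rightarrow> nat) (q :: 'a \<times> 'b).
     (\<Sum>i=1..k. c ((xs(1 := fst q)) i, (ys(1 := snd q)) i)) - (\<Sum>i=1..k. c ((xs(1 := fst q)) i, (ys(1 := snd q)) (\<sigma> i))))"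
  have Fc: "continuous_on UNIV (\<lambda>q. ereal (F z q))" for z
  proof -
    obtain k xs ys \<sigma> where z: "z = (k, xs, ys, \<sigma>)" by (cases z) auto
    show ?thesis unfolding z F_def case_prod_conv
      by (intro continuous_on_ereal continuous_on_diff continuous_on_sum cont_upd[OF cont])
  qed
  have eq: "{q. t < I_fun c \<Gamma> q} = (\<Union>z\<in>T. {q. t < ereal (F z q)})"
  proof (intro set_eqI iffI)
    fix q assume "q \<in> {q. t < I_fun c \<Gamma> q}"
    then obtain k :: nat and xs ys \<sigma> where h: "k \<ge> 2" "(xs 1, ys 1) = q" "\<forall>i\<in>{2..k}. (xs i, ys i) \<in> \<Gamma>" "\<sigma> permutes {1..k}"
      and lt: "t < ereal ((\<Sum>i=1..k. c (xs i, ys i)) - (\<Sum>i=1..k. c (xs i, ys (\<sigma> i))))"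
      unfolding I_fun_def less_SUP_iff by auto
    have u: "xs(1 := fst q) = xs" "ys(1 := snd q) = ys" using h(2) by auto
    have Feq: "F (k, xs, ys, \<sigma>) q = (\<Sum>i=1..k. c (xs i, ys i)) - (\<Sum>i=1..k. c (xs i, ys (\<sigma> i)))"
      by (simp only: F_def case_prod_conv u)
    have Tm: "(k, xs, ys, \<sigma>) \<in> T" using h by (simp add: T_def)
    show "q \<in> (\<Union>z\<in>T. {q. t < ereal (F z q)})" using lt by (intro UN_I[OF Tm]) (simp add: Feq)
  next
    fix q assume "q \<in> (\<Union>z\<in>T. {q. t < ereal (F z q)})"
    then obtain z where zT: "z \<in> T" and ltz: "t < ereal (F z q)" by blast
    obtain k xs ys \<sigma> where z: "z = (k, xs, ys, \<sigma>)" by (cases z) auto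
    have h: "k \<ge> 2" "\<forall>i\<in>{2..k}. (xs i, ys i) \<in> \<Gamma>" "\<sigma> permutes {1..k}"
      using zT unfolding z T_def by simp_all
    have lt: "t < ereal (F (k, xs, ys, \<sigma>) q)" using ltz z by simp
    let ?xs = "xs(1 := fst q)" and ?ys = "ys(1 := snd q)"
    have mem: "(k, ?xs, ?ys, \<sigma>) \<in> {(k::nat, xs, ys, \<sigma>). k \<ge> 2 \<and> (xs 1, ys 1) = q \<and>
        (\<forall>i\<in>{2..k}. (xs i, ys i) \<in> \<Gamma>) \<and> \<sigma> permutes {1..k}}"
      using h by auto
    have Feq: "F (k, xs, ys, \<sigma>) q = (\<Sum>i=1..k. c (?xs i, ?ys i)) - (\<Sum>i=1..k. c (?xs i, ?ys (\<sigma> i)))"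
      by (simp only: F_def case_prod_conv)
    have "t < I_fun c \<Gamma> q"
      unfolding I_fun_def less_SUP_iff by (rule bexI[OF _ mem]) (simp only: case_prod_conv lt[unfolded Feq])
    then show "q \<in> {q. t < I_fun c \<Gamma> q}" by simp
  qed
  show "open {q. t < I_fun c \<Gamma> q}"
    unfolding eq by (intro open_UN ballI open_Collect_less continuous_on_const Fc)
qed

theorem lemma4p2:
  fixes c :: "'a::polish_space \<times> 'b::polish_space \<Rightarrow> real"
    and \<Gamma> :: "('a \<times> 'b) set"
  assumes cont: "continuous_on UNIV c"
    and nonneg: "\<And>p. c p \<ge> 0"
    and ne: "\<Gamma> \<noteq> {}"
    and cm: "c_cyclically_monotone c \<Gamma>"
  shows "(\<forall>p. I_fun c \<Gamma> p \<ge> 0)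
    \<and> lower_semicont (I_fun c \<Gamma>)
    \<and> (\<forall>p\<in>\<Gamma>. I_fun c \<Gamma> p = 0)
    \<and> (\<forall>p. I_fun c \<Gamma> p \<ge> J_fun c \<Gamma> p)
    \<and> (\<forall>x y. (x \<in> fst ` \<Gamma> \<or> y \<in> snd ` \<Gamma>) \<longrightarrow> I_fun c \<Gamma> (x, y) = J_fun c \<Gamma> (x, y))"
proof (intro conjI allI ballI impI)
  fix p show "I_fun c \<Gamma> p \<ge> 0" using I_ge0[OF ne] .
next
  show "lower_semicont (I_fun c \<Gamma>)" using I_lsc[OF cont] .
next
  fix p assume "p \<in> \<Gamma>"
  then show "I_fun c \<Gamma> p = 0" using I_ge0[OF ne, of c p] I_le0_on_Gamma[OF cm] by (meson order.antisym)
next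
  fix p show "I_fun c \<Gamma> p \<ge> J_fun c \<Gamma> p" using I_ge_J .
next
  fix x y assume "x \<in> fst ` \<Gamma> \<or> y \<in> snd ` \<Gamma>"
  then show "I_fun c \<Gamma> (x, y) = J_fun c \<Gamma> (x, y)"
    using I_ge_J I_le_J[OF cm] by (meson order.antisym)
qed

end
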